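(* Fix $\tau\in(0,1)$ and consider the moment function $\rho(y,q)=\tau-\mathbb I[y\le q]$ ($m=0$), so that $q_a^*(x;\tau)$, the $\tau$-quantile of $Y\mid X=x,A=a$, plays the role of $\kappa_a^*$ and the CDTE is the conditional quantile treatment effect $\mathrm{CQTE}(x;\tau)=q_1^*(x;\tau)-q_0^*(x;\tau)$. Assume the conditional distributions of $Y$ given $X=x,A=a$ are continuous. Then the general pseudo-outcome (defined in the context) specializes to $$\psi^{\mathrm{CQTE}}(Z,e,q,f)=q_1(X;\tau)-q_0(X;\tau)+\frac{A-e(X)}{e(X)(1-e(X))}\,\frac{1}{f_A(X)}\big(\tau-\mathbb I[Y\le q_A(X;\tau)]\big),$$ where $f_a$ is a stand-in for $f_a^*(x)=f_{Y\mid X=x,A=a}(q_a^*(x;\tau))$, the conditional density of $Y$ given $X=x,A=a$ evaluated at the conditional quantile. Furthermore, if the Boundedness Assumption (in the context) holds and the cross-fitted nuisance estimates $(\hat e^{(k)},\hat q^{(k)},\hat f^{(k)})$ lie in $\Xi$, then $$\mathcal E\lesssim\sum_{k=1}^K\sum_{a=0}^1\|\hat q_a^{(k)}-q_a^*\|\Big(\|\hat e^{(k)}-e^*\|+\Big\|\frac{1}{\hat f^{(k)}_a}-\frac{1}{f^*_a}\Big\|+\|\hat q^{(k)}_a-q^*_a\|\Big).$$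
   Context: $Z=(X,A,Y)$ with $X\in\mathcal X$, $A\in\{0,1\}$, $Y\in\mathbb R$, $e^*(x)=P(A=1\mid X=x)$; $\|g\|=\mathbb E[g^2]^{1/2}$. $D$ denotes directional derivatives. General setting: for a moment function $\rho:\mathbb R\times\mathbb R^{m+1}\to\mathbb R^{m+1}$, $\rho(y,\nu)$ with $\nu=(\kappa,h)$, $\nu_a^*(x)=(\kappa_a^*(x),h_a^*(x))$ solves $\mathbb E[\rho(Y,\nu)\mid X=x,A=a]=0$; $J_a^*(x)=D_\nu\{\mathbb E[\rho(Y,\nu)\mid X=x,A=a]\}|_{\nu=\nu_a^*(x)}$ (assumed invertible) and $\alpha_a^*(x)$ is the first row of $J_a^*(x)^{-1}$. The pseudo-outcome for stand-ins $(e,\alpha,\nu)$ is $\psi(Z,e,\alpha,\nu)=\kappa_1(X)-\kappa_0(X)-\frac{A-e(X)}{e(X)(1-e(X))}\alpha_A(X)^T\rho(Y,\nu_A(X))$. Cross-fitting: given $n$ i.i.d. copies of $Z$, $K\ge2$ folds $I_k=\{i:i\equiv k-1\pmod K\}$, nuisance estimates $(\hat e^{(k)},\hat\alpha^{(k)},\hat\nu^{(k)})$ built from data outside $I_k$. $\mathcal E=\sum_{k=1}^K\mathcal E(\hat e^{(k)},\hat\alpha^{(k)},\hat\nu^{(k)})$, where $\mathcal E(e,\alpha,\nu)=\sum_{a=0}^1\big(\|\kappa_a-\kappa_a^*\|\|e-e^*\|+\sum_{i,j}G_{ij}\|\alpha_{a,i}-\alpha^*_{a,i}\|\|\nu_{a,j}-\nu^*_{a,j}\|+\sum_{i,j}H_{ij}\|\nu_{a,i}-\nu^*_{a,i}\|\|\nu_{a,j}-\nu^*_{a,j}\|\big)$.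 Boundedness Assumption: for a set $\Xi$ of nuisance realizations, there exist $c_1>0,c_2\ge0,c_3\ge0,c_4>0,c_5\ge0$ and $G,H\in\{0,1\}^{(m+1)\times(m+1)}$ such that for all $(e,\alpha,\nu)\in\Xi$, $a$, $i,j,l$, and $\bar\nu_a$ in the convex hull of $\{\nu_a^*,\nu_a\}$: $e^*(X),e(X)\in[c_1,1-c_1]$; $|D_{\nu_{a,j}}\mathbb E[\rho_i(Y,\nu_a)\mid X,A=a]|_{\nu_a=\bar\nu_a}|\le c_2G_{ij}$; $|D_{\nu_{a,l}}D_{\nu_{a,j}}\mathbb E[\rho_i(Y,\nu_a)\mid X=x,A=a]|_{\nu_a=\bar\nu_a}|\le c_3H_{jl}$; $\det(D_{\nu_a}\{\mathbb E[\rho(Y,\nu_a)\mid X=x,A=a]\}|_{\nu_a=\bar\nu_a})>c_4$; $|\rho_i(Y,\bar\nu_a)|\le c_5$. *)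

theory Defs
  imports "HOL-Probability.Probability"
begin

text \<open>Observed data: a probability space M, covariates X with values in a measurable
space SX, treatment A in {0,1} (encoded as nat), outcome Y real. The case m = 0 of the general
setting: the moment function is scalar, rho :: real => real => real, the nuisance
nu_a = kappa_a is scalar, the Jacobian J is 1x1 and alpha is 1/J.\<close>

definition cond_dist ::
  "'w measure \<Rightarrow> 'x measure \<Rightarrow> ('w \<Rightarrow> 'x) \<Rightarrow> ('w \<Rightarrow> nat) \<Rightarrow> ('w \<Rightarrow> real)
   \<Rightarrow> ('x \<Rightarrow> nat \<Rightarrow> real measure) \<Rightarrow> bool" where
  "cond_dist M SX X A Y K \<longleftrightarrow>
     (\<forall>x a. prob_space (K x a) \<and> sets (K x a) = sets borel) \<and>
     (\<forall>a C. C \<in> sets borel \<longrightarrow> (\<lambda>x. measure (K x a) C) \<in> borel_measurable SX) \<and>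
     (\<forall>B C a. B \<in> sets SX \<longrightarrow> C \<in> sets borel \<longrightarrow> a \<in> {0,1} \<longrightarrow>
        measure M {\<omega> \<in> space M. X \<omega> \<in> B \<and> A \<omega> = a \<and> Y \<omega> \<in> C}
        = (\<integral>\<omega>. indicator {\<omega> \<in> space M. X \<omega> \<in> B \<and> A \<omega> = a} \<omega>
                   * measure (K (X \<omega>) a) C \<partial>M))"

definition propensity ::
  "'w measure \<Rightarrow> 'x measure \<Rightarrow> ('w \<Rightarrow> 'x) \<Rightarrow> ('w \<Rightarrow> nat) \<Rightarrow> ('x \<Rightarrow> real) \<Rightarrow> bool" where
  "propensity M SX X A e \<longleftrightarrow> e \<in> borel_measurable SX \<and>
     (\<forall>B \<in> sets SX. measure M {\<omega> \<in> space M. X \<omega> \<in> B \<and> A \<omega> = 1}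
        = (\<integral>\<omega>. indicator {\<omega> \<in> space M. X \<omega> \<in> B} \<omega> * e (X \<omega>) \<partial>M))"

definition cond_moment ::
  "('x \<Rightarrow> nat \<Rightarrow> real measure) \<Rightarrow> (real \<Rightarrow> real \<Rightarrow> real) \<Rightarrow> nat \<Rightarrow> 'x \<Rightarrow> real \<Rightarrow> real" where
  "cond_moment K \<rho> a x \<nu> = (\<integral>y. \<rho> y \<nu> \<partial>(K x a))"

definition quantile :: "real \<Rightarrow> real measure \<Rightarrow> real" where
  "quantile \<tau> P = Inf {q. \<tau> \<le> measure P {..q}}"

definition rho_q :: "real \<Rightarrow> real \<Rightarrow> real \<Rightarrow> real" where
  "rho_q \<tau> y q = \<tau> - (if y \<le> q then 1 else 0)"

definition psi_gen ::
  "(real \<Rightarrow> real \<Rightarrow> real) \<Rightarrow> ('x \<Rightarrow> real) \<Rightarrow> (nat \<Rightarrow> 'x \<Rightarrow> real) \<Rightarrow> (nat \<Rightarrow> 'x \<Rightarrow> real)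
    \<Rightarrow> 'x \<times> nat \<times> real \<Rightarrow> real" where
  "psi_gen \<rho> e \<alpha> \<nu> z = (case z of (x, a, y) \<Rightarrow>
     \<nu> 1 x - \<nu> 0 x - (real a - e x) / (e x * (1 - e x)) * \<alpha> a x * \<rho> y (\<nu> a x))"

definition psi_cqte ::
  "real \<Rightarrow> ('x \<Rightarrow> real) \<Rightarrow> (nat \<Rightarrow> 'x \<Rightarrow> real) \<Rightarrow> (nat \<Rightarrow> 'x \<Rightarrow> real)
    \<Rightarrow> 'x \<times> nat \<times> real \<Rightarrow> real" where
  "psi_cqte \<tau> e q f z = (case z of (x, a, y) \<Rightarrow>
     q 1 x - q 0 x + (real a - e x) / (e x * (1 - e x)) * (1 / f a x)
       * (\<tau> - (if y \<le> q a x then 1 else 0)))"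

definition L2n :: "'w measure \<Rightarrow> ('w \<Rightarrow> 'x) \<Rightarrow> ('x \<Rightarrow> real) \<Rightarrow> ennreal" where
  "L2n M X g = (let I = (\<integral>\<^sup>+ \<omega>. ennreal ((g (X \<omega>))\<^sup>2) \<partial>M) in
     if I = \<infinity> then \<infinity> else ennreal (sqrt (enn2real I)))"

text \<open>Error functional E(e, alpha, nu) for m = 0 (G, H are 1x1 0/1 matrices).\<close>
definition err_E ::
  "'w measure \<Rightarrow> ('w \<Rightarrow> 'x) \<Rightarrow> nat \<Rightarrow> nat \<Rightarrow> ('x \<Rightarrow> real) \<Rightarrow> (nat \<Rightarrow> 'x \<Rightarrow> real)
   \<Rightarrow> (nat \<Rightarrow> 'x \<Rightarrow> real) \<Rightarrow> ('x \<Rightarrow> real) \<Rightarrow> (nat \<Rightarrow> 'x \<Rightarrow> real) \<Rightarrow> (nat \<Rightarrow> 'x \<Rightarrow> real)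
   \<Rightarrow> ennreal" where
  "err_E M X G H estar astar nstar e \<alpha> \<nu> =
     (\<Sum>a\<in>{0,1}.
        L2n M X (\<lambda>x. \<nu> a x - nstar a x) * L2n M X (\<lambda>x. e x - estar x)
      + of_nat G * L2n M X (\<lambda>x. \<alpha> a x - astar a x) * L2n M X (\<lambda>x. \<nu> a x - nstar a x)
      + of_nat H * L2n M X (\<lambda>x. \<nu> a x - nstar a x) * L2n M X (\<lambda>x. \<nu> a x - nstar a x))"

text \<open>Boundedness Assumption (m = 0) for a set Xi of nuisance realizations (e, q, f);
 the nuisance nu is q.
 The determinant of the 1x1 Jacobian is bounded away from 0 in absolute value.\<close>
definition boundedness ::
  "'w measure \<Rightarrow> ('w \<Rightarrow> 'x) \<Rightarrow> ('w \<Rightarrow> real) \<Rightarrow> ('x \<Rightarrow> real) \<Rightarrow> (nat \<Rightarrow> 'x \<Rightarrow> real)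
   \<Rightarrow> (real \<Rightarrow> real \<Rightarrow> real) \<Rightarrow> (nat \<Rightarrow> 'x \<Rightarrow> real \<Rightarrow> real)
   \<Rightarrow> (('x \<Rightarrow> real) \<times> (nat \<Rightarrow> 'x \<Rightarrow> real) \<times> (nat \<Rightarrow> 'x \<Rightarrow> real)) set
   \<Rightarrow> real \<Rightarrow> real \<Rightarrow> real \<Rightarrow> real \<Rightarrow> real \<Rightarrow> nat \<Rightarrow> nat \<Rightarrow> bool" where
  "boundedness M X Y estar nstar \<rho> \<Phi> \<Xi> c1 c2 c3 c4 c5 G H \<longleftrightarrow>
     c1 > 0 \<and> c2 \<ge> 0 \<and> c3 \<ge> 0 \<and> c4 > 0 \<and> c5 \<ge> 0 \<and> G \<in> {0,1} \<and> H \<in> {0,1} \<and>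
     (\<forall>(e, q, f) \<in> \<Xi>. AE \<omega> in M.
        estar (X \<omega>) \<in> {c1..1-c1} \<and> e (X \<omega>) \<in> {c1..1-c1} \<and>
        (\<forall>a \<in> {0,1}. \<forall>nb \<in> closed_segment (nstar a (X \<omega>)) (q a (X \<omega>)).
           \<bar>deriv (\<Phi> a (X \<omega>)) nb\<bar> \<le> c2 * real G \<and>
           \<bar>deriv (deriv (\<Phi> a (X \<omega>))) nb\<bar> \<le> c3 * real H \<and>
           \<bar>deriv (\<Phi> a (X \<omega>)) nb\<bar> > c4 \<and>
           \<bar>\<rho> (Y \<omega>) nb\<bar> \<le> c5))"

end

theory Submission
  imports Defs
begin

lemma L2n_uminus: "L2n M X (\<lambda>x. - g x) = L2n M X g"
  by (simp add: L2n_def)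


lemma cdf_density_deriv:
  fixes f :: "real \<Rightarrow> real"
  assumes fm: "f \<in> borel_measurable borel" and nn: "\<And>y. 0 \<le> f y"
    and P: "prob_space (density lborel f)" and c: "isCont f p"
  shows "((\<lambda>q. measure (density lborel f) {..q}) has_real_derivative f p) (at p)"
proof -
  let ?K = "density lborel (\<lambda>y. ennreal (f y))"
  have fm': "f \<in> borel_measurable lborel" using fm by simp
  have "emeasure ?K UNIV = 1" using prob_space.emeasure_space_1[OF P] by simp
  moreover have "emeasure ?K UNIV = (\<integral>\<^sup>+ x. ennreal (f x) * indicator UNIV x \<partial>lborel)"
    by (rule emeasure_density) (use fm in auto)
  ultimately have "(\<integral>\<^sup>+ x. ennreal (f x) \<partial>lborel) = 1"
    by simp
  hence fi: "integrable lborel f"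
    by (intro integrableI_nonneg) (auto simp: fm nn)
  have meas: "measure ?K {a..u} = integral {a..u} f" for a u
  proof -
    have si: "set_integrable lborel {a..u} f"
      unfolding set_integrable_def by (rule integrable_mult_indicator) (auto simp: fi)
    have "emeasure ?K {a..u} = (\<integral>\<^sup>+ x. ennreal (f x) * indicator {a..u} x \<partial>lborel)"
      by (rule emeasure_density) (use fm in auto)
    also have "\<dots> = (\<integral>\<^sup>+ x. ennreal (indicator {a..u} x *\<^sub>R f x) \<partial>lborel)"
      by (intro nn_integral_cong) (auto split: split_indicator)
    also have "\<dots> = ennreal (LINT x : {a..u} | lborel. f x)"
      unfolding set_lebesgue_integral_def
      using si unfolding set_integrable_def
      by (intro nn_integral_eq_integral) (auto simp: nn)
    also have "\<dots> = ennreal (integral {a..u} f)"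
      using set_borel_integral_eq_integral(2)[OF si] by simp
    moreover have "0 \<le> integral {a..u} f"
      using set_borel_integral_eq_integral(1)[OF si] by (rule integral_nonneg) (simp add: nn)
    ultimately show ?thesis
      by (simp add: measure_def)
  qed
  define a b where "a = p - 1" and "b = p + 1"
  have ab: "a < p" "p < b" by (auto simp: a_def b_def)
  have fin: "finite_measure ?K" using P by (simp add: prob_space_def)
  have split: "measure ?K {..u} = measure ?K {..<a} + integral {a..u} f" if "u \<in> {a<..<b}" for u
  proof -
    have "{..u} = {..<a} \<union> {a..u}" using that by auto
    hence "measure ?K {..u} = measure ?K ({..<a} \<union> {a..u})" by simp
    also have "\<dots> = measure ?K {..<a} + measure ?K {a..u}"
      by (rule finite_measure.finite_measure_Union[OF fin]) auto
    finally show ?thesis using meas by simp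
  qed
  have si: "set_integrable lborel {a..b} f"
    unfolding set_integrable_def by (rule integrable_mult_indicator) (auto simp: fi)
  have D: "((\<lambda>u. integral {a..u} f) has_vector_derivative f p) (at p within ({a..b} - {}))"
    by (rule integral_has_vector_derivative_continuous_at)
       (use set_borel_integral_eq_integral(1)[OF si] ab c in \<open>auto intro: continuous_at_imp_continuous_at_within\<close>)
  hence "((\<lambda>u. integral {a..u} f) has_real_derivative f p) (at p)"
    using ab by (simp add: has_real_derivative_iff_has_vector_derivative at_within_Icc_at)
  hence "((\<lambda>u. measure ?K {..<a} + integral {a..u} f) has_real_derivative f p) (at p)"
    by (auto intro!: derivative_eq_intros)
  thus ?thesis
    by (rule has_field_derivative_transform_within_open[where S="{a<..<b}"])
       (use ab split in auto)
qed

lemma quantile_density: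
  fixes f :: "real \<Rightarrow> real"
  assumes P: "prob_space (density lborel f)" and tau: "0 < \<tau>" "\<tau> < 1"
    and c: "isCont (\<lambda>q. measure (density lborel f) {..q}) (quantile \<tau> (density lborel f))"
  shows "measure (density lborel f) {..quantile \<tau> (density lborel f)} = \<tau>"
proof -
  let ?P = "density lborel (\<lambda>y. ennreal (f y))"
  interpret real_distribution ?P
    by (simp add: real_distribution_def real_distribution_axioms_def P)
  define F where "F = (\<lambda>q. measure ?P {..q})"
  have Fc: "F = cdf ?P" by (simp add: F_def cdf_def2 fun_eq_iff)
  have mono: "x \<le> y \<Longrightarrow> F x \<le> F y" for x y unfolding Fc by (rule cdf_nondecreasing)
  define S where "S = {q. \<tau> \<le> F q}"
  have "eventually (\<lambda>q. F q > \<tau>) at_top"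
    using order_tendstoD(1)[OF cdf_lim_at_top_prob tau(2)] by (simp add: Fc)
  then obtain q1 where q1: "F q1 > \<tau>" by (auto simp: eventually_at_top_linorder)
  have "eventually (\<lambda>q. F q < \<tau>) at_bot"
    using order_tendstoD(2)[OF cdf_lim_at_bot tau(1)] by (simp add: Fc)
  then obtain q0 where q0: "F q0 < \<tau>" by (auto simp: eventually_at_bot_linorder)
  have Sne: "S \<noteq> {}" using q1 by (auto simp: S_def intro!: exI[of _ q1])
  have lb: "q0 \<le> s" if "s \<in> S" for s
  proof (rule ccontr)
    assume "\<not> q0 \<le> s"
    hence "F s \<le> F q0" by (intro mono) auto
    thus False using that q0 by (auto simp: S_def)
  qed
  have bdd: "bdd_below S" using lb by (auto simp: bdd_below_def)
  define qs where "qs = Inf S"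
  have qsq: "quantile \<tau> ?P = qs" by (simp add: quantile_def qs_def S_def F_def)
  have c': "isCont F qs" using c qsq by (simp add: F_def)
  hence L: "\<forall>r>0. \<exists>s>0. \<forall>x. x \<noteq> qs \<and> norm (x - qs) < s \<longrightarrow> norm (F x - F qs) < r"
    by (simp add: isCont_def LIM_eq)
  have "\<not> F qs > \<tau>"
  proof
    assume h: "F qs > \<tau>"
    obtain d where d: "d > 0" "\<forall>x. x \<noteq> qs \<and> norm (x - qs) < d \<longrightarrow> norm (F x - F qs) < F qs - \<tau>"
      using L[rule_format, of "F qs - \<tau>"] h by auto
    have "\<bar>F (qs - d/2) - F qs\<bar> < F qs - \<tau>" using d(2)[rule_format, of "qs - d/2"] d(1) by auto
    hence "qs - d/2 \<in> S" by (auto simp: S_def)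
    hence "qs \<le> qs - d/2" unfolding qs_def using bdd by (rule cInf_lower)
    thus False using d(1) by auto
  qed
  moreover have "\<not> F qs < \<tau>"
  proof
    assume h: "F qs < \<tau>"
    obtain d where d: "d > 0" "\<forall>x. x \<noteq> qs \<and> norm (x - qs) < d \<longrightarrow> norm (F x - F qs) < \<tau> - F qs"
      using L[rule_format, of "\<tau> - F qs"] h by auto
    have "qs + d/2 \<le> s" if "s \<in> S" for s
    proof (rule ccontr)
      assume "\<not> qs + d/2 \<le> s"
      moreover have "qs \<le> s" unfolding qs_def using that bdd by (rule cInf_lower)
      ultimately have "\<bar>s - qs\<bar> < d" using d(1) by simp
      hence "F s < \<tau>"
      proof (cases "s = qs")
        case False
        thus ?thesis using d(2)[rule_format, of s] \<open>\<bar>s - qs\<bar> < d\<close> by simp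
      qed (use h in simp)
      thus False using that by (auto simp: S_def)
    qed
    hence "qs + d/2 \<le> qs" unfolding qs_def using Sne by (intro cInf_greatest) auto
    thus False using d(1) by auto
  qed
  ultimately show ?thesis using qsq by (simp add: F_def)
qed
theorem corollary1:
  fixes M :: "'w measure" and SX :: "'x measure"
    and X :: "'w \<Rightarrow> 'x" and A :: "'w \<Rightarrow> nat" and Y :: "'w \<Rightarrow> real"
    and K :: "'x \<Rightarrow> nat \<Rightarrow> real measure" and dens :: "'x \<Rightarrow> nat \<Rightarrow> real \<Rightarrow> real"
    and estar :: "'x \<Rightarrow> real" and \<tau> :: "real"
    and \<Xi> :: "(('x \<Rightarrow> real) \<times> (nat \<Rightarrow> 'x \<Rightarrow> real) \<times> (nat \<Rightarrow> 'x \<Rightarrow> real)) set"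
    and c1 c2 c3 c4 c5 :: real and G H :: nat and nfolds :: nat
  defines "qstar \<equiv> \<lambda>a x. quantile \<tau> (K x a)"
    and "fstar \<equiv> \<lambda>a x. dens x a (quantile \<tau> (K x a))"
    and "\<Phi> \<equiv> cond_moment K (rho_q \<tau>)"
  defines "astar \<equiv> \<lambda>a x. inverse (deriv (\<Phi> a x) (qstar a x))"
  assumes M: "prob_space M"
    and X: "X \<in> measurable M SX" and A: "A \<in> measurable M (count_space UNIV)"
    and A01: "\<forall>\<omega>\<in>space M. A \<omega> \<in> {0,1}" and Y: "Y \<in> borel_measurable M"
    and K: "cond_dist M SX X A Y K"
    and e: "propensity M SX X A estar"
    and tau: "0 < \<tau>" "\<tau> < 1"
    and dens: "\<forall>x. \<forall>a\<in>{0,1}. dens x a \<in> borel_measurable borel \<and> (\<forall>y. 0 \<le> dens x a y)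
                 \<and> K x a = density lborel (\<lambda>y. ennreal (dens x a y))
                 \<and> isCont (dens x a) (qstar a x)"
    and Jinv: "\<forall>x. \<forall>a\<in>{0,1}. deriv (\<Phi> a x) (qstar a x) \<noteq> 0"
    and K2: "nfolds \<ge> 2"
    and bdd: "boundedness M X Y estar qstar (rho_q \<tau>) \<Phi> \<Xi> c1 c2 c3 c4 c5 G H"
  shows "(\<forall>x. \<forall>a\<in>{0,1}. \<Phi> a x (qstar a x) = 0
                      \<and> (\<Phi> a x has_real_derivative - fstar a x) (at (qstar a x))
                      \<and> astar a x = - 1 / fstar a x)
       \<and> (\<forall>e q f z. psi_gen (rho_q \<tau>) e (\<lambda>a x. - 1 / f a x) q z = psi_cqte \<tau> e q f z)
       \<and> (\<exists>C::real. C > 0 \<and>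
           (\<forall>ehat qhat fhat.
              (\<forall>k\<in>{1..nfolds}. (ehat k, qhat k, fhat k) \<in> \<Xi>) \<longrightarrow>
              (\<Sum>k\<in>{1..nfolds}. err_E M X G H estar astar qstar
                                  (ehat k) (\<lambda>a x. - 1 / fhat k a x) (qhat k))
              \<le> ennreal C * (\<Sum>k\<in>{1..nfolds}. \<Sum>a\<in>{0,1}.
                   L2n M X (\<lambda>x. qhat k a x - qstar a x)
                   * (L2n M X (\<lambda>x. ehat k x - estar x)
                      + L2n M X (\<lambda>x. 1 / fhat k a x - 1 / fstar a x)
                      + L2n M X (\<lambda>x. qhat k a x - qstar a x)))))"
proof -
  have Kp: "prob_space (K x a)" for x a using K by (simp add: cond_dist_def)
  have P1: "\<forall>x. \<forall>a\<in>{0,1}. \<Phi> a x (qstar a x) = 0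
                      \<and> (\<Phi> a x has_real_derivative - fstar a x) (at (qstar a x))
                      \<and> astar a x = - 1 / fstar a x"
  proof (intro allI ballI)
    fix x a assume a: "a \<in> ({0,1}::nat set)"
    define f where "f = dens x a"
    have fm: "f \<in> borel_measurable borel" and nn: "\<And>y. 0 \<le> f y"
      and Keq: "K x a = density lborel (\<lambda>y. ennreal (f y))"
      and cont: "isCont f (qstar a x)"
      using dens a by (auto simp: f_def)
    have P: "prob_space (density lborel (\<lambda>y. ennreal (f y)))" using Kp[of x a] Keq by simp
    interpret Kx: prob_space "K x a" by (rule Kp)
    have Phi: "\<Phi> a x q = \<tau> - measure (K x a) {..q}" for q
    proof -
      have e1: "(\<lambda>y. rho_q \<tau> y q) = (\<lambda>y. \<tau> - indicator {..q} y)"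
        by (auto simp: rho_q_def fun_eq_iff split: split_indicator)
      have "sets (K x a) = sets borel" using K by (simp add: cond_dist_def)
      hence ms: "{..q} \<in> sets (K x a)" by simp
      have "integrable (K x a) (indicator {..q} :: real \<Rightarrow> real)"
        by (rule integrable_real_indicator[OF ms]) (simp add: Kx.emeasure_finite less_top[symmetric])
      hence "(\<integral>y. \<tau> - indicator {..q} y \<partial>K x a) = \<tau> - measure (K x a) {..q}"
        using ms by (simp add: Bochner_Integration.integral_diff Kx.prob_space)
      thus ?thesis by (simp add: \<Phi>_def cond_moment_def e1)
    qed
    have D0: "((\<lambda>q. measure (K x a) {..q}) has_real_derivative f (qstar a x)) (at (qstar a x))"
      unfolding Keq by (rule cdf_density_deriv[OF fm nn P cont])
    have fs: "fstar a x = f (qstar a x)" by (simp add: fstar_def qstar_def f_def)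
    have "\<Phi> a x = (\<lambda>q. \<tau> - measure (K x a) {..q})" using Phi by (simp add: fun_eq_iff)
    hence D: "(\<Phi> a x has_real_derivative - fstar a x) (at (qstar a x))"
      using fs by (auto intro!: derivative_eq_intros D0)
    have "measure (K x a) {..qstar a x} = \<tau>"
      unfolding qstar_def Keq
      by (rule quantile_density[OF P tau]) (use DERIV_isCont[OF D0] Keq in \<open>simp add: qstar_def\<close>)
    hence Z: "\<Phi> a x (qstar a x) = 0" by (simp add: Phi)
    have "astar a x = - 1 / fstar a x"
      using DERIV_imp_deriv[OF D] by (simp add: astar_def inverse_eq_divide)
    with D Z show "\<Phi> a x (qstar a x) = 0
                      \<and> (\<Phi> a x has_real_derivative - fstar a x) (at (qstar a x))
                      \<and> astar a x = - 1 / fstar a x" by simp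
  qed
  have P2: "\<forall>e q f z. psi_gen (rho_q \<tau>) e (\<lambda>a x. - 1 / f a x) q z = psi_cqte \<tau> e q f z"
    by (auto simp: psi_gen_def psi_cqte_def rho_q_def split: prod.splits)
  have GH: "G \<in> {0,1}" "H \<in> {0,1}" using bdd by (auto simp: boundedness_def)
  have P3: "(\<Sum>k\<in>{1..nfolds}. err_E M X G H estar astar qstar
                                  (ehat k) (\<lambda>a x. - 1 / fhat k a x) (qhat k))
              \<le> ennreal 1 * (\<Sum>k\<in>{1..nfolds}. \<Sum>a\<in>{0,1}.
                   L2n M X (\<lambda>x. qhat k a x - qstar a x)
                   * (L2n M X (\<lambda>x. ehat k x - estar x)
                      + L2n M X (\<lambda>x. 1 / fhat k a x - 1 / fstar a x)
                      + L2n M X (\<lambda>x. qhat k a x - qstar a x)))" for ehat qhat fhat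
  proof -
    have "err_E M X G H estar astar qstar (ehat k) (\<lambda>a x. - 1 / fhat k a x) (qhat k)
       \<le> (\<Sum>a\<in>{0,1}. L2n M X (\<lambda>x. qhat k a x - qstar a x)
                   * (L2n M X (\<lambda>x. ehat k x - estar x)
                      + L2n M X (\<lambda>x. 1 / fhat k a x - 1 / fstar a x)
                      + L2n M X (\<lambda>x. qhat k a x - qstar a x)))" for k
      unfolding err_E_def
    proof (rule sum_mono)
      fix a :: nat assume a: "a \<in> {0,1}"
      have "(\<lambda>x. - 1 / fhat k a x - astar a x) = (\<lambda>x. - (1 / fhat k a x - 1 / fstar a x))"
        using P1 a by (auto simp: fun_eq_iff)
      hence L: "L2n M X (\<lambda>x. - 1 / fhat k a x - astar a x) = L2n M X (\<lambda>x. 1 / fhat k a x - 1 / fstar a x)"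
        using L2n_uminus[of M X "\<lambda>x. 1 / fhat k a x - 1 / fstar a x"] by simp
      define u where "u = L2n M X (\<lambda>x. qhat k a x - qstar a x)"
      define v where "v = L2n M X (\<lambda>x. ehat k x - estar x)"
      define w where "w = L2n M X (\<lambda>x. 1 / fhat k a x - 1 / fstar a x)"
      have g: "of_nat G * w * u \<le> u * w" using GH by (auto simp: mult.commute)
      have h: "of_nat H * u * u \<le> u * u" using GH by auto
      have "u * v + of_nat G * w * u + of_nat H * u * u \<le> u * v + u * w + u * u"
        using g h by (intro add_mono) auto
      also have "\<dots> = u * (v + w + u)" by (simp add: distrib_left)
      finally have fin: "u * v + of_nat G * w * u + of_nat H * u * u \<le> u * (v + w + u)" .
      show "L2n M X (\<lambda>x. qhat k a x - qstar a x) * L2n M X (\<lambda>x. ehat k x - estar x) +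
         of_nat G * L2n M X (\<lambda>x. - 1 / fhat k a x - astar a x) * L2n M X (\<lambda>x. qhat k a x - qstar a x) +
         of_nat H * L2n M X (\<lambda>x. qhat k a x - qstar a x) * L2n M X (\<lambda>x. qhat k a x - qstar a x)
         \<le> L2n M X (\<lambda>x. qhat k a x - qstar a x) *
           (L2n M X (\<lambda>x. ehat k x - estar x) + L2n M X (\<lambda>x. 1 / fhat k a x - 1 / fstar a x) +
            L2n M X (\<lambda>x. qhat k a x - qstar a x))"
        unfolding L using fin by (simp only: u_def v_def w_def)
    qed
    hence "(\<Sum>k\<in>{1..nfolds}. err_E M X G H estar astar qstar
                                  (ehat k) (\<lambda>a x. - 1 / fhat k a x) (qhat k))
         \<le> (\<Sum>k\<in>{1..nfolds}. \<Sum>a\<in>{0,1}.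
                   L2n M X (\<lambda>x. qhat k a x - qstar a x)
                   * (L2n M X (\<lambda>x. ehat k x - estar x)
                      + L2n M X (\<lambda>x. 1 / fhat k a x - 1 / fstar a x)
                      + L2n M X (\<lambda>x. qhat k a x - qstar a x)))"
      by (intro sum_mono)
    thus ?thesis by simp
  qed
  show ?thesis
    using P1 P2 P3 by (intro conjI exI[of _ "1::real"]) auto
qed

end
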